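(* Let $G$ be a simple graph with $m$ edges and girth $g(G)>3$. Then $$\gamma(G)=2EM_2(G)-\beta(G)+4EM_1(G)-2F(G)+6M_1(G)-8m.$$
   Context: All graphs are finite, simple and undirected; $d_G(v)$ is the degree of $v$. $M_1(G)=\sum_v d_G(v)^2$, $F(G)=\sum_v d_G(v)^3$. For an edge $e=uv$, $d_G(e)=d_G(u)+d_G(v)-2$. Write $e\sim f$ for two distinct edges sharing a vertex and $e\cap f$ for that vertex; sums over $e\sim f$ are over unordered pairs. $EM_1(G)=\sum_{e\in E(G)}d_G(e)^2$, $EM_2(G)=\sum_{e\sim f}d_G(e)d_G(f)$, $\beta(G)=\sum_{e\sim f}d_G(e\cap f)(d_G(e)+d_G(f))$. A vertex $v$ is incident to an edge $e=xy$ ($v\ne x,y$) if $\{vx,vy\}\cap E(G)\ne\emptyset$; $\Lambda(G)$ is the set of pairs $\{v,e\}$ with $v$ incident to $e$ in this sense; $\gamma(G)=\sum_{\{v,xy\}\in\Lambda(G)}d_G(v)[d_G(x)+d_G(y)]$. *)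

theory Defs
  imports Main "HOL-Library.Extended_Nat"
begin

definition simple_graph :: "'a set \<Rightarrow> 'a set set \<Rightarrow> bool" where
  "simple_graph V E \<longleftrightarrow> finite V \<and> (\<forall>e\<in>E. e \<subseteq> V \<and> card e = 2)"

definition deg :: "'a set set \<Rightarrow> 'a \<Rightarrow> int" where
  "deg E v = int (card {e\<in>E. v \<in> e})"

definition edeg :: "'a set set \<Rightarrow> 'a set \<Rightarrow> int" where
  "edeg E e = (\<Sum>x\<in>e. deg E x) - 2"

text \<open>Cycles as lists of at least 3 distinct vertices, cyclically consecutive ones adjacent;
  girth = minimum cycle length (infinity if acyclic).\<close>
definition is_cycle :: "'a set set \<Rightarrow> 'a list \<Rightarrow> bool" where
  "is_cycle E cs \<longleftrightarrow> length cs \<ge> 3 \<and> distinct cs \<and>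
     (\<forall>i<length cs. {cs ! i, cs ! ((i + 1) mod length cs)} \<in> E)"

definition girth :: "'a set set \<Rightarrow> enat" where
  "girth E = (INF cs \<in> {cs. is_cycle E cs}. enat (length cs))"

definition M1 :: "'a set \<Rightarrow> 'a set set \<Rightarrow> int" where
  "M1 V E = (\<Sum>v\<in>V. deg E v ^ 2)"

definition Fidx :: "'a set \<Rightarrow> 'a set set \<Rightarrow> int" where
  "Fidx V E = (\<Sum>v\<in>V. deg E v ^ 3)"

definition EM1 :: "'a set set \<Rightarrow> int" where
  "EM1 E = (\<Sum>e\<in>E. edeg E e ^ 2)"

definition adj_edge_pairs :: "'a set set \<Rightarrow> 'a set set set" where
  "adj_edge_pairs E = {{e, f} | e f. e \<in> E \<and> f \<in> E \<and> e \<noteq> f \<and> e \<inter> f \<noteq> {}}"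

definition EM2 :: "'a set set \<Rightarrow> int" where
  "EM2 E = (\<Sum>p\<in>adj_edge_pairs E. \<Prod>e\<in>p. edeg E e)"

text \<open>beta: sum over e ~ f of d(e \<inter> f) (d(e) + d(f)); \<Inter>{e,f} = e \<inter> f is the common vertex.\<close>
definition beta :: "'a set set \<Rightarrow> int" where
  "beta E = (\<Sum>p\<in>adj_edge_pairs E. deg E (the_elem (\<Inter>p)) * (\<Sum>e\<in>p. edeg E e))"

definition Lambda :: "'a set \<Rightarrow> 'a set set \<Rightarrow> ('a \<times> 'a set) set" where
  "Lambda V E = {(v, e). v \<in> V \<and> e \<in> E \<and> v \<notin> e \<and> (\<exists>x\<in>e. {v, x} \<in> E)}"

definition gamma :: "'a set \<Rightarrow> 'a set set \<Rightarrow> int" where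
  "gamma V E = (\<Sum>(v, e)\<in>Lambda V E. deg E v * (\<Sum>x\<in>e. deg E x))"

end

theory Submission
  imports Defs
begin

lemma sum_two_to_one:
  fixes g :: "'b \<Rightarrow> int"
  assumes fin: "finite A"
    and inv: "\<And>x. x \<in> A \<Longrightarrow> \<sigma> x \<in> A \<and> \<sigma> x \<noteq> x \<and> f (\<sigma> x) = f x"
    and fib: "\<And>x y. x \<in> A \<Longrightarrow> y \<in> A \<Longrightarrow> f x = f y \<Longrightarrow> y = x \<or> y = \<sigma> x"
  shows "(\<Sum>x\<in>A. g (f x)) = 2 * sum g (f ` A)"
proof -
  have "(\<Sum>x\<in>A. g (f x)) = (\<Sum>y\<in>f`A. \<Sum>x\<in>{x. x \<in> A \<and> f x = y}. g (f x))"
    using sum.image_gen[OF fin, of "\<lambda>x. g (f x)" f] by blast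
  also have "\<dots> = (\<Sum>y\<in>f`A. 2 * g y)"
  proof (rule sum.cong[OF refl])
    fix y assume "y \<in> f`A"
    then obtain x where x: "x\<in>A" "y = f x" by auto
    have "{x'. x' \<in> A \<and> f x' = y} = {x, \<sigma> x}"
      using inv[OF x(1)] x apply auto
      using fib[OF x(1)] by metis
    moreover have ne: "\<sigma> x \<noteq> x" using inv x by auto
    have "(\<Sum>x\<in>{x, \<sigma> x}. g (f x)) = g (f x) + g (f (\<sigma> x))" using ne by simp
    ultimately show "(\<Sum>x\<in>{x. x \<in> A \<and> f x = y}. g (f x)) = 2 * g y"
      using x inv[OF x(1)] by simp
  qed
  also have "\<dots> = 2 * sum g (f`A)" by (simp add: sum_distrib_left)
  finally show ?thesis .
qed

locale tfg =
  fixes V :: "'a set" and E :: "'a set set"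
  assumes sg: "simple_graph V E"
    and tf: "\<And>a b c. {a,b} \<in> E \<Longrightarrow> {b,c} \<in> E \<Longrightarrow> {a,c} \<in> E \<Longrightarrow> False"
begin

lemma finV: "finite V" using sg simple_graph_def by auto
lemma edge: "e \<in> E \<Longrightarrow> e \<subseteq> V \<and> card e = 2" using sg simple_graph_def by auto
lemma finE: "finite E"
proof -
  have "E \<subseteq> Pow V" using edge by auto
  thus ?thesis using finV finite_subset by blast
qed
lemma adj_ne: "{a,b} \<in> E \<Longrightarrow> a \<noteq> b" using edge by fastforce
lemma adjV: "{a,b} \<in> E \<Longrightarrow> a \<in> V \<and> b \<in> V" using edge by blast
lemma edge_cases: "e \<in> E \<Longrightarrow> \<exists>a b. a \<noteq> b \<and> e = {a,b}"
  using edge by (metis card_2_iff)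

lemma deg_sum: "v \<in> V \<Longrightarrow> deg E v = (\<Sum>u\<in>V. if {v,u} \<in> E then 1 else 0)"
proof -
  assume v: "v \<in> V"
  have im: "{e\<in>E. v\<in>e} = (\<lambda>u. {v,u}) ` {u\<in>V. {v,u}\<in>E}"
  proof
    show "{e\<in>E. v\<in>e} \<subseteq> (\<lambda>u. {v,u}) ` {u\<in>V. {v,u}\<in>E}"
    proof
      fix e assume e: "e \<in> {e\<in>E. v\<in>e}"
      then obtain a b where ab: "a \<noteq> b" "e = {a,b}" using edge_cases by blast
      show "e \<in> (\<lambda>u. {v,u}) ` {u\<in>V. {v,u}\<in>E}"
      proof (cases "v = a")
        case True thus ?thesis using e ab adjV by auto
      next
        case False
        hence "v = b" using e ab by auto
        thus ?thesis using e ab adjV by (auto simp: insert_commute)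
      qed
    qed
  qed auto
  have inj: "inj_on (\<lambda>u. {v,u}) {u\<in>V. {v,u}\<in>E}"
    by (auto simp: inj_on_def doubleton_eq_iff)
  have "deg E v = int (card {u\<in>V. {v,u}\<in>E})"
    unfolding deg_def im using card_image[OF inj] by simp
  also have "\<dots> = (\<Sum>u\<in>{u\<in>V. {v,u}\<in>E}. 1)" by simp
  also have "\<dots> = (\<Sum>u\<in>V. if {v,u} \<in> E then 1 else 0)"
    using sum.inter_filter[OF finV, of "\<lambda>_. 1::int" "\<lambda>u. {v,u}\<in>E"] by simp
  finally show ?thesis .
qed

lemma ed2: "{a,b} \<in> E \<Longrightarrow> edeg E {a,b} = deg E a + deg E b - 2"
  unfolding edeg_def using adj_ne by simp

lemma L2: "2 * (\<Sum>e\<in>E. f e) = (\<Sum>a\<in>V. \<Sum>b\<in>V. if {a,b}\<in>E then f {a,b} else (0::int))"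
proof -
  define D where "D = {x\<in>V\<times>V. {fst x, snd x} \<in> E}"
  have finD: "finite D" unfolding D_def using finV by simp
  have img: "(\<lambda>x. {fst x, snd x}) ` D = E"
  proof
    show "(\<lambda>x. {fst x, snd x}) ` D \<subseteq> E" unfolding D_def by auto
    show "E \<subseteq> (\<lambda>x. {fst x, snd x}) ` D"
    proof
      fix e assume e: "e \<in> E"
      then obtain a b where "a \<noteq> b" "e = {a,b}" using edge_cases by blast
      thus "e \<in> (\<lambda>x. {fst x, snd x}) ` D" unfolding D_def using e adjV
        by (auto intro!: image_eqI[of _ _ "(a,b)"])
    qed
  qed
  have "(\<Sum>x\<in>D. f ((\<lambda>x. {fst x, snd x}) x)) = 2 * sum f ((\<lambda>x. {fst x, snd x}) ` D)"
    apply (rule sum_two_to_one[OF finD, where \<sigma> = "\<lambda>x. (snd x, fst x)"])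
    unfolding D_def using adj_ne by (auto simp: insert_commute doubleton_eq_iff prod_eq_iff)
  hence "2 * (\<Sum>e\<in>E. f e) = (\<Sum>x\<in>D. f {fst x, snd x})" using img by simp
  also have "\<dots> = (\<Sum>x\<in>V\<times>V. if {fst x, snd x} \<in> E then f {fst x, snd x} else 0)"
    unfolding D_def using sum.inter_filter finV by (simp add: sum.inter_filter)
  also have "\<dots> = (\<Sum>a\<in>V. \<Sum>b\<in>V. if {a,b}\<in>E then f {a,b} else (0::int))"
    unfolding sum.cartesian_product' by (auto intro!: sum.cong)
  finally show ?thesis .
qed

definition T :: "('a \<times> 'a \<times> 'a) set" where
  "T = {(a,c,b). {a,c} \<in> E \<and> {c,b} \<in> E \<and> a \<noteq> b}"

lemma T_filter: "T = {t\<in>V\<times>V\<times>V. case t of (a,c,b) \<Rightarrow> {a,c} \<in> E \<and> {c,b} \<in> E \<and> a \<noteq> b}"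
  using adjV by (auto simp: T_def)

lemma finT: "finite T" using T_filter finV by simp

lemma T_iter: "(\<Sum>(a,c,b)\<in>T. h a c b) =
  (\<Sum>a\<in>V. \<Sum>c\<in>V. \<Sum>b\<in>V. if {a,c} \<in> E \<and> {c,b} \<in> E \<and> a \<noteq> b then h a c b else (0::int))"
proof -
  have "(\<Sum>(a,c,b)\<in>T. h a c b) = (\<Sum>t\<in>V\<times>V\<times>V. if (case t of (a,c,b) \<Rightarrow> {a,c} \<in> E \<and> {c,b} \<in> E \<and> a \<noteq> b)
      then (case t of (a,c,b) \<Rightarrow> h a c b) else 0)"
    unfolding T_filter using finV by (simp add: sum.inter_filter)
  also have "\<dots> = (\<Sum>a\<in>V. \<Sum>c\<in>V. \<Sum>b\<in>V. if {a,c} \<in> E \<and> {c,b} \<in> E \<and> a \<noteq> b then h a c b else (0::int))"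
    unfolding sum.cartesian_product' by (auto intro!: sum.cong)
  finally show ?thesis .
qed

lemma T_swap: "(\<Sum>(a,c,b)\<in>T. h a c b) = (\<Sum>(a,c,b)\<in>T. (h b c a :: int))"
  by (rule sum.reindex_bij_witness[where i="\<lambda>(a,c,b). (b,c,a)" and j="\<lambda>(a,c,b). (b,c,a)"])
     (auto simp: T_def insert_commute)

lemma pair_eq:
  assumes "a \<noteq> c" "c \<noteq> b" "a \<noteq> b" "a' \<noteq> c'" "c' \<noteq> b'" "a' \<noteq> b'"
    and "{{a,c},{c,b}} = {{a',c'},{c',b'}}"
  shows "(a'=a \<and> c'=c \<and> b'=b) \<or> (a'=b \<and> c'=c \<and> b'=a)"
proof -
  from assms(7) have "({a,c}={a',c'} \<and> {c,b}={c',b'}) \<or> ({a,c}={c',b'} \<and> {c,b}={a',c'})"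
    by (simp add: doubleton_eq_iff)
  then show ?thesis
  proof
    assume h: "{a,c}={a',c'} \<and> {c,b}={c',b'}"
    then have "a=a' \<and> c=c' \<or> a=c' \<and> c=a'" "c=c' \<and> b=b' \<or> c=b' \<and> b=c'"
      by (simp_all add: doubleton_eq_iff)
    then show ?thesis using assms(1-6) by blast
  next
    assume h: "{a,c}={c',b'} \<and> {c,b}={a',c'}"
    then have "a=c' \<and> c=b' \<or> a=b' \<and> c=c'" "c=a' \<and> b=c' \<or> c=c' \<and> b=a'"
      by (simp_all add: doubleton_eq_iff)
    then show ?thesis using assms(1-6) by blast
  qed
qed

lemma fiberT: "(a,c,b)\<in>T \<Longrightarrow> (a',c',b')\<in>T \<Longrightarrow> {{a,c},{c,b}} = {{a',c'},{c',b'}}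
   \<Longrightarrow> (a',c',b') = (a,c,b) \<or> (a',c',b') = (b,c,a)"
proof -
  assume t: "(a,c,b)\<in>T" "(a',c',b')\<in>T" and eq: "{{a,c},{c,b}} = {{a',c'},{c',b'}}"
  have "a \<noteq> c" "c \<noteq> b" "a \<noteq> b" "a' \<noteq> c'" "c' \<noteq> b'" "a' \<noteq> b'"
    using t adj_ne unfolding T_def by auto
  from pair_eq[OF this eq] show ?thesis by auto
qed

lemma edge_at: "e \<in> E \<Longrightarrow> z \<in> e \<Longrightarrow> \<exists>a. e = {a,z} \<and> a \<noteq> z"
  using edge_cases by fastforce

lemma L3: "2 * (\<Sum>p\<in>adj_edge_pairs E. h p) = (\<Sum>(a,c,b)\<in>T. (h {{a,c},{c,b}} :: int))"
proof -
  let ?f = "\<lambda>(a::'a,c::'a,b::'a). {{a,c},{c,b}}"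
  have img: "?f ` T = adj_edge_pairs E"
  proof
    show "?f ` T \<subseteq> adj_edge_pairs E"
    proof
      fix p assume "p \<in> ?f ` T"
      then obtain a c b where t: "(a,c,b) \<in> T" "p = {{a,c},{c,b}}" by auto
      hence "{a,c} \<noteq> {c,b}" using adj_ne by (auto simp: T_def doubleton_eq_iff)
      thus "p \<in> adj_edge_pairs E" using t unfolding adj_edge_pairs_def T_def by blast
    qed
    show "adj_edge_pairs E \<subseteq> ?f ` T"
    proof
      fix p assume "p \<in> adj_edge_pairs E"
      then obtain e f where ef: "e \<in> E" "f \<in> E" "e \<noteq> f" "e \<inter> f \<noteq> {}" "p = {e,f}"
        unfolding adj_edge_pairs_def by blast
      then obtain z where z: "z \<in> e" "z \<in> f" by blast
      obtain a where a: "e = {a,z}" "a \<noteq> z" using edge_at ef z by blast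
      obtain b where b: "f = {z,b}" "b \<noteq> z" using edge_at[OF ef(2) z(2)] by (auto simp: insert_commute)
      have "a \<noteq> b" using a b ef by (auto simp: insert_commute)
      hence "(a,z,b) \<in> T" using ef a b by (simp add: T_def)
      moreover have "p = ?f (a,z,b)" using ef a b by (simp add: insert_commute)
      ultimately show "p \<in> ?f ` T" by blast
    qed
  qed
  have "(\<Sum>x\<in>T. h (?f x)) = 2 * sum h (?f ` T)"
    apply (rule sum_two_to_one[OF finT, where \<sigma> = "\<lambda>(a,c,b). (b,c,a)"])
     apply (auto simp: T_def insert_commute)[1]
    subgoal for x y
    proof -
      assume xy: "x \<in> T" "y \<in> T" "?f x = ?f y"
      obtain a c b where x: "x = (a,c,b)" using prod_cases3 by blast
      obtain a' c' b' where y: "y = (a',c',b')" using prod_cases3 by blast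
      show ?thesis using fiberT[of a c b a' c' b'] xy x y by auto
    qed
    done
  moreover have "(\<Sum>x\<in>T. h (?f x)) = (\<Sum>(a,c,b)\<in>T. (h {{a,c},{c,b}} :: int))"
    by (rule sum.cong) auto
  ultimately show ?thesis using img by simp
qed

lemma L4: "gamma V E = (\<Sum>(a,c,b)\<in>T. deg E a * (deg E c + deg E b))"
  unfolding gamma_def
proof (rule sum.reindex_cong[where l="\<lambda>(a,c,b). (a,{c,b})"])
  show "inj_on (\<lambda>(a,c,b). (a,{c,b})) T"
  proof (rule inj_onI)
    fix x y assume x: "x \<in> T" and y: "y \<in> T" and eq: "(case x of (a,c,b) \<Rightarrow> (a,{c,b})) = (case y of (a,c,b) \<Rightarrow> (a,{c,b}))"
    obtain a c b where xx: "x = (a,c,b)" by (cases x) auto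
    obtain a' c' b' where yy: "y = (a',c',b')" by (cases y) auto
    have "a' = a" "{c,b} = {c',b'}" using eq xx yy by auto
    moreover have "\<not> (c = b' \<and> b = c')"
    proof
      assume "c = b' \<and> b = c'"
      thus False using x y xx yy \<open>a' = a\<close> tf[of a c b] by (auto simp: T_def)
    qed
    ultimately show "x = y" using xx yy by (auto simp: doubleton_eq_iff)
  qed
  show "Lambda V E = (\<lambda>(a,c,b). (a,{c,b})) ` T"
  proof
    show "(\<lambda>(a,c,b). (a,{c,b})) ` T \<subseteq> Lambda V E"
      using adj_ne adjV by (fastforce simp: T_def Lambda_def)
    show "Lambda V E \<subseteq> (\<lambda>(a,c,b). (a,{c,b})) ` T"
    proof
      fix q assume "q \<in> Lambda V E"
      then obtain v e x where q: "q = (v,e)" "v \<in> V" "e \<in> E" "v \<notin> e" "x \<in> e" "{v,x} \<in> E"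
        unfolding Lambda_def by blast
      obtain y where y: "e = {y,x}" "y \<noteq> x" using edge_at q by blast
      have "(v,x,y) \<in> T" using q y by (auto simp: T_def insert_commute)
      moreover have "q = (\<lambda>(a,c,b). (a,{c,b})) (v,x,y)" using q y by (auto simp: insert_commute)
      ultimately show "q \<in> (\<lambda>(a,c,b). (a,{c,b})) ` T" by blast
    qed
  qed
  fix t assume "t \<in> T"
  then obtain a c b where t: "t = (a,c,b)" "{c,b} \<in> E" by (auto simp: T_def)
  show "(case (case t of (a,c,b) \<Rightarrow> (a,{c,b})) of (v,e) \<Rightarrow> deg E v * (\<Sum>x\<in>e. deg E x))
      = (case t of (a,c,b) \<Rightarrow> deg E a * (deg E c + deg E b))"
    using t adj_ne[OF t(2)] by simp
qed

lemma cnt: "b \<in> V \<Longrightarrow> c \<in> V \<Longrightarrow> {c,b} \<in> E \<Longrightarrow>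
   (\<Sum>a\<in>V. if {c,a}\<in>E \<and> a\<noteq>b then 1 else 0) = deg E c - (1::int)"
proof -
  assume b: "b \<in> V" and c: "c \<in> V" and cb: "{c,b} \<in> E"
  have "deg E c = (\<Sum>a\<in>V. if {c,a}\<in>E then 1 else 0)" using deg_sum c .
  also have "\<dots> = 1 + (\<Sum>a\<in>V-{b}. if {c,a}\<in>E then 1 else 0)" using sum.remove[OF finV b, of "\<lambda>a. if {c,a}\<in>E then 1 else (0::int)"] cb by simp
  finally have 1: "deg E c = 1 + (\<Sum>a\<in>V-{b}. if {c,a}\<in>E then 1 else 0)" .
  have 2: "(\<Sum>a\<in>V. if {c,a}\<in>E \<and> a\<noteq>b then 1 else 0) = (0::int) + (\<Sum>a\<in>V-{b}. if {c,a}\<in>E \<and> a\<noteq>b then 1 else 0)"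
    using sum.remove[OF finV b, of "\<lambda>a. if {c,a}\<in>E \<and> a\<noteq>b then 1 else (0::int)"] by simp
  have 3: "(\<Sum>a\<in>V-{b}. if {c,a}\<in>E \<and> a\<noteq>b then 1 else 0) = (\<Sum>a\<in>V-{b}. if {c,a}\<in>E then 1 else (0::int))"
    by (rule sum.cong) auto
  show ?thesis using 1 2 3 by simp
qed

lemma C: "(\<Sum>(a,c,b)\<in>T. g c b) = (\<Sum>c\<in>V. \<Sum>b\<in>V. if {c,b}\<in>E then g c b * (deg E c - 1) else (0::int))"
proof -
  have "(\<Sum>(a,c,b)\<in>T. g c b) = (\<Sum>a\<in>V. \<Sum>c\<in>V. \<Sum>b\<in>V. if {a,c} \<in> E \<and> {c,b} \<in> E \<and> a \<noteq> b then g c b else 0)"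
    by (rule T_iter)
  also have "\<dots> = (\<Sum>c\<in>V. \<Sum>a\<in>V. \<Sum>b\<in>V. if {a,c} \<in> E \<and> {c,b} \<in> E \<and> a \<noteq> b then g c b else 0)"
    by (rule sum.swap)
  also have "\<dots> = (\<Sum>c\<in>V. \<Sum>b\<in>V. \<Sum>a\<in>V. if {a,c} \<in> E \<and> {c,b} \<in> E \<and> a \<noteq> b then g c b else 0)"
    by (rule sum.cong[OF refl], rule sum.swap)
  also have "\<dots> = (\<Sum>c\<in>V. \<Sum>b\<in>V. if {c,b}\<in>E then g c b * (deg E c - 1) else (0::int))"
  proof (rule sum.cong[OF refl], rule sum.cong[OF refl])
    fix c b assume c: "c\<in>V" and b: "b\<in>V"
    show "(\<Sum>a\<in>V. if {a,c}\<in>E \<and> {c,b}\<in>E \<and> a\<noteq>b then g c b else 0) = (if {c,b}\<in>E then g c b * (deg E c - 1) else 0)"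
    proof (cases "{c,b}\<in>E")
      case False thus ?thesis by simp
    next
      case True
      have "(\<Sum>a\<in>V. if {a,c}\<in>E \<and> {c,b}\<in>E \<and> a\<noteq>b then g c b else 0)
          = (\<Sum>a\<in>V. g c b * (if {c,a}\<in>E \<and> a\<noteq>b then 1 else 0))"
        using True by (auto intro!: sum.cong simp: insert_commute)
      also have "\<dots> = g c b * (\<Sum>a\<in>V. if {c,a}\<in>E \<and> a\<noteq>b then 1 else 0)" by (simp add: sum_distrib_left)
      also have "\<dots> = g c b * (deg E c - 1)" using cnt[OF b c True] by simp
      finally show ?thesis using True by simp
    qed
  qed
  finally show ?thesis .
qed

lemma sumdeg: "(\<Sum>v\<in>V. deg E v) = 2 * int (card E)"
proof -
  have "2 * (\<Sum>e\<in>E. (1::int)) = (\<Sum>a\<in>V. \<Sum>b\<in>V. if {a,b}\<in>E then 1 else (0::int))"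
    using L2[of "\<lambda>_. 1"] by simp
  also have "\<dots> = (\<Sum>v\<in>V. deg E v)" using deg_sum by simp
  finally show ?thesis by simp
qed

lemma Wsum: "(\<Sum>(a,c,b)\<in>T. 4 - 2 * deg E c) = - 2 * Fidx V E + 6 * M1 V E - 8 * int (card E)"
proof -
  have "(\<Sum>(a,c,b)\<in>T. 4 - 2 * deg E c) = (\<Sum>c\<in>V. \<Sum>b\<in>V. if {c,b}\<in>E then (4 - 2 * deg E c) * (deg E c - 1) else 0)"
    using C[of "\<lambda>c b. 4 - 2 * deg E c"] by simp
  also have "\<dots> = (\<Sum>c\<in>V. (4 - 2 * deg E c) * (deg E c - 1) * (\<Sum>b\<in>V. if {c,b}\<in>E then 1 else 0))"
    by (rule sum.cong[OF refl]) (simp add: sum_distrib_left if_distrib cong: if_cong)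
  also have "\<dots> = (\<Sum>c\<in>V. (4 - 2 * deg E c) * (deg E c - 1) * deg E c)"
    using deg_sum by simp
  also have "\<dots> = (\<Sum>c\<in>V. - 2 * deg E c ^ 3 + 6 * deg E c ^ 2 - 4 * deg E c)"
    by (rule sum.cong[OF refl]) (simp add: algebra_simps power3_eq_cube power2_eq_square)
  also have "\<dots> = - 2 * Fidx V E + 6 * M1 V E - 4 * (\<Sum>v\<in>V. deg E v)"
    unfolding Fidx_def M1_def by (simp add: sum.distrib sum_subtractf sum_distrib_left sum_negf)
  finally show ?thesis using sumdeg by simp
qed

lemma Zsum: "(\<Sum>(a,c,b)\<in>T. edeg E {c,b}) = EM1 E"
proof -
  define S1 where "S1 = (\<Sum>c\<in>V. \<Sum>b\<in>V. if {c,b}\<in>E then edeg E {c,b} * (deg E c - 1) else (0::int))"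
  define S2 where "S2 = (\<Sum>a\<in>V. \<Sum>b\<in>V. if {a,b}\<in>E then edeg E {a,b} * (deg E b - 1) else (0::int))"
  have 1: "(\<Sum>(a,c,b)\<in>T. edeg E {c,b}) = S1" unfolding S1_def by (rule C)
  have "S2 = (\<Sum>b\<in>V. \<Sum>a\<in>V. if {a,b}\<in>E then edeg E {a,b} * (deg E b - 1) else (0::int))"
    unfolding S2_def by (rule sum.swap)
  also have "\<dots> = S1" unfolding S1_def by (intro sum.cong refl) (metis insert_commute)
  finally have 2: "S2 = S1" .
  have "2 * EM1 E = (\<Sum>a\<in>V. \<Sum>b\<in>V. if {a,b}\<in>E then edeg E {a,b} ^ 2 else (0::int))"
    unfolding EM1_def by (rule L2)
  also have "\<dots> = (\<Sum>a\<in>V. \<Sum>b\<in>V. (if {a,b}\<in>E then edeg E {a,b} * (deg E a - 1) else 0)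
       + (if {a,b}\<in>E then edeg E {a,b} * (deg E b - 1) else (0::int)))"
    by (intro sum.cong refl) (auto simp: ed2 power2_eq_square algebra_simps)
  also have "\<dots> = S1 + S2" unfolding S1_def S2_def by (simp add: sum.distrib)
  finally show ?thesis using 1 2 by simp
qed

lemma main: "gamma V E = 2 * EM2 E - beta E + 4 * EM1 E - 2 * Fidx V E + 6 * M1 V E - 8 * int (card E)"
proof -
  define A where "A = (\<Sum>(a,c,b)\<in>T. edeg E {a,c} * edeg E {c,b})"
  define B where "B = (\<Sum>(a,c,b)\<in>T. edeg E {a,c})"
  define Cc where "Cc = (\<Sum>(a,c,b)\<in>T. edeg E {c,b})"
  define D where "D = (\<Sum>(a,c,b)\<in>T. deg E c * edeg E {c,b})"
  define D' where "D' = (\<Sum>(a,c,b)\<in>T. deg E c * edeg E {a,c})"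
  define W where "W = (\<Sum>(a,c,b)\<in>T. 4 - 2 * deg E c)"
  have "gamma V E = (\<Sum>(a,c,b)\<in>T. edeg E {a,c} * edeg E {c,b} + 2 * edeg E {a,c} + 2 * edeg E {c,b}
       - deg E c * edeg E {c,b} + (4 - 2 * deg E c))"
    unfolding L4
  proof (rule sum.cong[OF refl])
    fix t assume "t \<in> T"
    then obtain a c b where t: "t = (a,c,b)" "{a,c}\<in>E" "{c,b}\<in>E" by (auto simp: T_def)
    show "(case t of (a,c,b) \<Rightarrow> deg E a * (deg E c + deg E b)) = (case t of (a,c,b) \<Rightarrow>
       edeg E {a,c} * edeg E {c,b} + 2 * edeg E {a,c} + 2 * edeg E {c,b}
       - deg E c * edeg E {c,b} + (4 - 2 * deg E c))"
      using t by (simp add: ed2 algebra_simps)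
  qed
  also have "\<dots> = A + 2 * B + 2 * Cc - D + W"
    unfolding A_def B_def Cc_def D_def W_def
    by (simp add: sum.distrib sum_subtractf sum_distrib_left split_def)
  finally have g: "gamma V E = A + 2 * B + 2 * Cc - D + W" .
  have "2 * EM2 E = (\<Sum>(a,c,b)\<in>T. \<Prod>e\<in>{{a,c},{c,b}}. edeg E e)"
    unfolding EM2_def by (rule L3)
  also have "\<dots> = A" unfolding A_def
  proof (rule sum.cong[OF refl])
    fix t assume "t \<in> T"
    then obtain a c b where t: "t = (a,c,b)" "{a,c}\<in>E" "{c,b}\<in>E" "a \<noteq> b" by (auto simp: T_def)
    have "{a,c} \<noteq> {c,b}" using t adj_ne by (auto simp: doubleton_eq_iff)
    thus "(case t of (a,c,b) \<Rightarrow> \<Prod>e\<in>{{a,c},{c,b}}. edeg E e) = (case t of (a,c,b) \<Rightarrow> edeg E {a,c} * edeg E {c,b})"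
      using t by simp
  qed
  finally have hA: "A = 2 * EM2 E" by simp
  have "2 * beta E = (\<Sum>(a,c,b)\<in>T. deg E (the_elem (\<Inter>{{a,c},{c,b}})) * (\<Sum>e\<in>{{a,c},{c,b}}. edeg E e))"
    unfolding beta_def by (rule L3)
  also have "\<dots> = D' + D" unfolding D_def D'_def sum.distrib[symmetric]
  proof (rule sum.cong[OF refl])
    fix t assume "t \<in> T"
    then obtain a c b where t: "t = (a,c,b)" "{a,c}\<in>E" "{c,b}\<in>E" "a \<noteq> b" by (auto simp: T_def)
    have ne: "{a,c} \<noteq> {c,b}" using t adj_ne by (auto simp: doubleton_eq_iff)
    have "{c} \<inter> {b} = {}" using t adj_ne by auto
    thus "(case t of (a,c,b) \<Rightarrow> deg E (the_elem (\<Inter>{{a,c},{c,b}})) * (\<Sum>e\<in>{{a,c},{c,b}}. edeg E e))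
        = (case t of (a,c,b) \<Rightarrow> deg E c * edeg E {a,c}) + (case t of (a,c,b) \<Rightarrow> deg E c * edeg E {c,b})"
      using t ne by (simp add: algebra_simps)
  qed
  also have "D' = D" unfolding D_def D'_def by (subst T_swap) (simp add: insert_commute)
  finally have hD: "D = beta E" by simp
  have hB: "B = Cc" unfolding B_def Cc_def by (subst T_swap) (simp add: insert_commute)
  have hC: "Cc = EM1 E" unfolding Cc_def by (rule Zsum)
  have hW: "W = - 2 * Fidx V E + 6 * M1 V E - 8 * int (card E)" unfolding W_def by (rule Wsum)
  show ?thesis using g hA hB hC hD hW by simp
qed

end

theorem lemma2p6:
  fixes V :: "'a set" and E :: "'a set set"
  assumes "simple_graph V E"
    and "girth E > 3"
  shows "gamma V E = 2 * EM2 E - beta E + 4 * EM1 E - 2 * Fidx V E + 6 * M1 V E - 8 * int (card E)"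
proof -
  have tf: False if h: "{a,b} \<in> E" "{b,c} \<in> E" "{a,c} \<in> E" for a b c
  proof -
    have card2: "card e = 2" if "e \<in> E" for e using assms(1) that unfolding simple_graph_def by auto
    have ne: "x \<noteq> y" if "{x,y} \<in> E" for x y using card2[OF that] by fastforce
    have "is_cycle E [a,b,c]"
      unfolding is_cycle_def
    proof (intro conjI allI impI)
      show "distinct [a,b,c]" using ne h by auto
      fix i assume "i < length [a,b,c]"
      hence "i = 0 \<or> i = 1 \<or> i = 2" by auto
      thus "{[a,b,c] ! i, [a,b,c] ! ((i + 1) mod length [a,b,c])} \<in> E"
        using h by (auto simp: insert_commute)
    qed simp
    hence "girth E \<le> enat (length [a,b,c])" unfolding girth_def by (rule INF_lower[OF CollectI])
    hence "girth E \<le> enat 3" by (simp add: numeral_3_eq_3)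
    hence "girth E \<le> 3" by (simp add: numeral_eq_enat)
    thus False using assms(2) by simp
  qed
  interpret tfg V E using assms(1) tf by unfold_locales blast+
  show ?thesis by (rule main)
qed

end
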